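(* Let $N,l$ be positive integers with $l<N$, let $\hat a(\xi)=\cos^{2N}(\xi/2)\sum_{j=0}^{l}\binom{N-1+j}{j}\sin^{2j}(\xi/2)$ be the mask of the pseudo spline of type II of order $(N,l)$, and let $\hat b(\xi)=e^{-i\xi}\overline{\hat a(\xi+\pi)}$. Then for all $0\le\alpha<\beta\le\pi$ and all $\xi\in\mathbb R$, $$|\hat b(\alpha)|\,\chi_{[-\beta,-\alpha]\cup[\alpha,\beta]}(\xi)\le|\hat b(\xi)|\le\min\Big\{1,\ \frac{\sum_{j=0}^{l}\binom{N+l}{j}}{2^{2N}}|\xi|^{2N}\Big\}.$$ *)

theory Defs
  imports "HOL-Analysis.Analysis"
begin

definition pseudo_mask_II :: "nat \<Rightarrow> nat \<Rightarrow> real \<Rightarrow> complex" where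
  "pseudo_mask_II N l \<xi> = complex_of_real
     ((cos (\<xi>/2)) ^ (2*N) * (\<Sum>j=0..l. real ((N - 1 + j) choose j) * (sin (\<xi>/2)) ^ (2*j)))"

definition pseudo_mask_b :: "nat \<Rightarrow> nat \<Rightarrow> real \<Rightarrow> complex" where
  "pseudo_mask_b N l \<xi> = cis (- \<xi>) * cnj (pseudo_mask_II N l (\<xi> + pi))"

end

theory Submission
  imports Defs
begin

definition cc :: "nat \<Rightarrow> nat \<Rightarrow> real" where "cc N j = real ((N - 1 + j) choose j)"
definition hh :: "nat \<Rightarrow> nat \<Rightarrow> real \<Rightarrow> real" where
  "hh N l y = (1 - y)^N * (\<Sum>j=0..l. cc N j * y^j)"

lemma telescope:
  assumes "N \<ge> 1"
  shows "- real N * (\<Sum>j=0..l. cc N j * y^j) + (1 - y) * (\<Sum>j=0..l. cc N j * (real j * y^(j-1)))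
         = - real (N + l) * cc N l * y^l"
proof (induction l)
  case 0 then show ?case by (simp add: cc_def)
next
  case (Suc l)
  have key: "real (Suc l) * cc N (Suc l) = real (N + l) * cc N l"
  proof -
    have "Suc (N - 1 + l) * ((N - 1 + l) choose l) = (Suc (N - 1 + l) choose Suc l) * Suc l"
      by (rule Suc_times_binomial_eq)
    moreover have "Suc (N - 1 + l) = N + l" "N - 1 + Suc l = N + l" using assms by auto
    ultimately have "(N + l) * ((N - 1 + l) choose l) = ((N - 1 + Suc l) choose Suc l) * Suc l"
      by simp
    then have "real ((N + l) * ((N - 1 + l) choose l)) = real (((N - 1 + Suc l) choose Suc l) * Suc l)"
      by simp
    then show ?thesis unfolding cc_def by (simp only: of_nat_mult) (simp add: algebra_simps)
  qed
  have "- real N * (\<Sum>j=0..Suc l. cc N j * y^j) + (1 - y) * (\<Sum>j=0..Suc l. cc N j * (real j * y^(j-1)))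
      = (- real N * (\<Sum>j=0..l. cc N j * y^j) + (1 - y) * (\<Sum>j=0..l. cc N j * (real j * y^(j-1))))
        - real N * cc N (Suc l) * y^Suc l + (1 - y) * (real (Suc l) * cc N (Suc l)) * y^l"
    by (simp add: algebra_simps)
  also have "\<dots> = - real (N + l) * cc N l * y^l - real N * cc N (Suc l) * y^Suc l
        + (1 - y) * (real (N + l) * cc N l) * y^l"
    using Suc.IH key by simp
  also have "\<dots> = - real N * cc N (Suc l) * y^Suc l - y * (real (Suc l) * cc N (Suc l)) * y^l"
    using key by (simp add: algebra_simps)
  also have "\<dots> = - real (N + Suc l) * cc N (Suc l) * y^Suc l"
    by (simp add: algebra_simps)
  finally show ?case .
qed

lemma hh_deriv:
  assumes "N \<ge> 1"
  shows "DERIV (hh N l) y :> - real (N + l) * cc N l * (1 - y)^(N-1) * y^l"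
proof -
  have d: "DERIV (hh N l) y :> (real N * (1 - y)^(N-1) * (-1)) * (\<Sum>j=0..l. cc N j * y^j)
      + (\<Sum>j=0..l. cc N j * (real j * y^(j-1))) * (1 - y)^N"
  proof -
    have d1: "DERIV (\<lambda>y. (1 - y)^N) y :> real N * (1 - y)^(N-1) * (-1)"
    proof -
      have "DERIV (\<lambda>y. 1 - y) y :> 0 - 1" by (intro DERIV_diff DERIV_const DERIV_ident)
      from DERIV_power[OF this, of N] show ?thesis by (simp add: mult.commute)
    qed
    have d2: "DERIV (\<lambda>y. \<Sum>j=0..l. cc N j * y^j) y :> (\<Sum>j=0..l. cc N j * (real j * y^(j-1)))"
      by (intro DERIV_sum DERIV_cmult) (simp add: DERIV_pow)
    show ?thesis unfolding hh_def by (rule DERIV_mult[OF d1 d2])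
  qed
  have "(real N * (1 - y)^(N-1) * (-1)) * (\<Sum>j=0..l. cc N j * y^j)
      + (\<Sum>j=0..l. cc N j * (real j * y^(j-1))) * (1 - y)^N
      = (1 - y)^(N-1) * (- real N * (\<Sum>j=0..l. cc N j * y^j) + (1 - y) * (\<Sum>j=0..l. cc N j * (real j * y^(j-1))))"
  proof -
    have e: "(1 - y)^N = (1 - y)^(N-1) * (1 - y)" using assms
      by (cases N) auto
    have gen: "\<And>n P S S' :: real. (n * P * (-1)) * S + S' * (P * (1 - y)) = P * (-n*S + (1-y)*S')"
      by (simp add: algebra_simps)
    show ?thesis unfolding e by (rule gen)
  qed
  also have "\<dots> = - real (N + l) * cc N l * (1 - y)^(N-1) * y^l"
    using telescope[OF assms] by simp
  finally show ?thesis by (rule DERIV_cong[OF d])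
qed

lemma hh_anti:
  assumes "N \<ge> 1" "0 \<le> a" "a \<le> b" "b \<le> 1"
  shows "hh N l b \<le> hh N l a"
proof (rule DERIV_nonpos_imp_nonincreasing[OF assms(3)])
  fix x assume "a \<le> x" "x \<le> b"
  then have "0 \<le> x" "x \<le> 1" using assms by auto
  then have "0 \<le> real (N + l) * cc N l * (1 - x)^(N-1) * x^l"
    by (simp add: cc_def)
  then show "\<exists>y. DERIV (hh N l) x :> y \<and> y \<le> 0"
    using hh_deriv[OF assms(1)] by (intro exI conjI) (auto simp del: of_nat_add)
qed


lemma hb: "cmod (pseudo_mask_b N l \<xi>) = hh N l (cos (\<xi>/2)^2)"
proof -
  have c: "cos ((\<xi> + pi)/2) = - sin (\<xi>/2)" and s: "sin ((\<xi> + pi)/2) = cos (\<xi>/2)"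
    using cos_add[of "\<xi>/2" "pi/2"] sin_add[of "\<xi>/2" "pi/2"] by (simp_all add: add_divide_distrib)
  define r where "r = cos ((\<xi> + pi)/2) ^ (2*N) * (\<Sum>j=0..l. real ((N - 1 + j) choose j) * sin ((\<xi> + pi)/2) ^ (2*j))"
  have r: "r = hh N l (cos (\<xi>/2)^2)"
    unfolding r_def hh_def cc_def c s
    by (simp add: power_mult sin_squared_eq power_mult_distrib)
  have "0 \<le> r" unfolding r
    unfolding hh_def cc_def by (intro mult_nonneg_nonneg sum_nonneg) (auto simp: abs_square_le_1)
  moreover have "cmod (pseudo_mask_b N l \<xi>) = \<bar>r\<bar>"
    unfolding pseudo_mask_b_def pseudo_mask_II_def r_def[symmetric]
    by (simp add: norm_mult)
  ultimately show ?thesis using r by simp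
qed

lemma hh_0: "hh N l 0 = 1"
proof -
  have "(\<Sum>j=0..l. cc N j * 0^j) = (\<Sum>j\<in>{0..l}. if j = 0 then 1 else (0::real))"
    by (rule sum.cong) (auto simp: cc_def)
  then show ?thesis unfolding hh_def by simp
qed

theorem mainTheorem5:
  fixes N l :: nat and \<alpha> \<beta> \<xi> :: real
  assumes "0 < l" and "l < N"
    and "0 \<le> \<alpha>" and "\<alpha> < \<beta>" and "\<beta> \<le> pi"
  shows "cmod (pseudo_mask_b N l \<alpha>) * indicator ({-\<beta>..-\<alpha>} \<union> {\<alpha>..\<beta>}) \<xi>
           \<le> cmod (pseudo_mask_b N l \<xi>) \<and>
         cmod (pseudo_mask_b N l \<xi>)
           \<le> min 1 ((\<Sum>j=0..l. real ((N + l) choose j)) / 2 ^ (2*N) * \<bar>\<xi>\<bar> ^ (2*N))"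
proof -
  have N1: "N \<ge> 1" using assms by simp
  define y where "y = cos (\<xi>/2)^2"
  have y01: "0 \<le> y" "y \<le> 1" unfolding y_def by (auto simp: abs_square_le_1)
  have B: "cmod (pseudo_mask_b N l \<xi>) = hh N l y" using hb y_def by simp
  have le1: "hh N l y \<le> 1" using hh_anti[OF N1 order_refl y01(1) y01(2), of l] hh_0 by simp
  have "hh N l y \<le> (1 - y)^N * (\<Sum>j=0..l. cc N j)"
    unfolding hh_def
  proof (rule mult_left_mono)
    show "(\<Sum>j = 0..l. cc N j * y ^ j) \<le> sum (cc N) {0..l}"
    proof (rule sum_mono)
      fix j show "cc N j * y ^ j \<le> cc N j"
        using y01 by (intro mult_left_le) (auto simp: cc_def power_le_one)
    qed
  qed (use y01 in simp)
  also have "(\<Sum>j=0..l. cc N j) = real ((N + l) choose l)"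
  proof -
    have "(\<Sum>j=0..l. cc N j) = real (\<Sum>j\<le>l. (N - 1 + j) choose j)"
      unfolding cc_def by (simp add: atLeast0AtMost)
    also have "\<dots> = real (Suc (N - 1 + l) choose l)" by (simp only: sum_choose_lower)
    also have "Suc (N - 1 + l) = N + l" using N1 by simp
    finally show ?thesis .
  qed
  also have "real ((N + l) choose l) \<le> (\<Sum>j=0..l. real ((N + l) choose j))"
    by (rule member_le_sum) auto
  finally have h2: "hh N l y \<le> (1 - y)^N * (\<Sum>j=0..l. real ((N + l) choose j))"
    by (smt (verit) mult_left_mono y01 zero_le_power)
  have "1 - y = sin (\<xi>/2)^2" unfolding y_def by (simp add: sin_squared_eq)
  also have "\<dots> \<le> (\<xi>/2)^2"
    using abs_sin_x_le_abs_x[of "\<xi>/2"] by (metis abs_ge_zero power2_abs power_mono)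
  finally have "(1 - y)^N \<le> ((\<xi>/2)^2)^N" using y01 by (intro power_mono) auto
  also have "((\<xi>/2)^2)^N = \<bar>\<xi>\<bar>^(2*N) / 2^(2*N)"
    by (simp add: power_mult power_divide)
  finally have "hh N l y \<le> (\<Sum>j=0..l. real ((N + l) choose j)) / 2 ^ (2*N) * \<bar>\<xi>\<bar> ^ (2*N)"
    using h2 by (smt (verit) mult_right_mono sum_nonneg of_nat_0_le_iff times_divide_eq_left mult.commute)
  with le1 B have upper: "cmod (pseudo_mask_b N l \<xi>) \<le> min 1 ((\<Sum>j=0..l. real ((N + l) choose j)) / 2 ^ (2*N) * \<bar>\<xi>\<bar> ^ (2*N))"
    by simp
  have lower: "cmod (pseudo_mask_b N l \<alpha>) * indicator ({-\<beta>..-\<alpha>} \<union> {\<alpha>..\<beta>}) \<xi> \<le> cmod (pseudo_mask_b N l \<xi>)"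
  proof (cases "\<xi> \<in> {-\<beta>..-\<alpha>} \<union> {\<alpha>..\<beta>}")
    case False then show ?thesis by simp
  next
    case True
    then have ab: "\<alpha> \<le> \<bar>\<xi>\<bar>" "\<bar>\<xi>\<bar> \<le> \<beta>" using assms by auto
    have ca: "cos (\<bar>\<xi>\<bar>/2) \<le> cos (\<alpha>/2)"
      using ab assms by (intro cos_monotone_0_pi_le) auto
    have "0 \<le> cos (\<bar>\<xi>\<bar>/2)"
      using ab assms by (intro cos_ge_zero) auto
    with ca have "cos (\<bar>\<xi>\<bar>/2)^2 \<le> cos (\<alpha>/2)^2" by (intro power_mono) auto
    moreover have "cos (\<bar>\<xi>\<bar>/2) = cos (\<xi>/2)"
      by (cases "\<xi> \<ge> 0") (auto simp: abs_if)
    ultimately have "y \<le> cos (\<alpha>/2)^2" unfolding y_def by simp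
    then have "hh N l (cos (\<alpha>/2)^2) \<le> hh N l y"
      using hh_anti[OF N1 y01(1)] by (simp add: abs_square_le_1)
    then show ?thesis using True B hb[of N l \<alpha>] by simp
  qed
  show ?thesis using lower upper by blast
qed

end
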